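(* Let $f\colon X\to X$ be a homeomorphism of a metric space $X$. Every isolated set $\Lambda$ of $f$ admits a (discrete) catenary function.
   Context: An $f$-invariant set $\Lambda$ is isolated if there is a compact neighborhood $N$ of $\Lambda$ (an isolating neighborhood) such that $f^n(x)\in N$ for all $n\in\mathbb{Z}$ implies $x\in\Lambda$. For $\mathcal L\colon N\to\mathbb{R}$, set $\ddot{\mathcal L}(x)=\mathcal L(f(x))-2\mathcal L(x)+\mathcal L(f^{-1}(x))$ whenever $f(x),x,f^{-1}(x)\in N$. A catenary function for $\Lambda$ is a continuous $\mathcal L\colon N\to\mathbb{R}$, with $N$ an isolating neighborhood of $\Lambda$, such that $\mathcal L(\Lambda)=0$, $\mathcal L>0$ on $N\setminus\Lambda$, and $\ddot{\mathcal L}(x)=\mathcal L(x)$ wherever $\ddot{\mathcal L}(x)$ is defined. *)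

theory Defs
  imports "HOL-Analysis.Analysis"
begin

definition zpow :: "('a \<Rightarrow> 'a) \<Rightarrow> int \<Rightarrow> 'a \<Rightarrow> 'a" where
  "zpow f n = (if 0 \<le> n then (f ^^ nat n) else (inv f ^^ nat (- n)))"

definition isolating_nbhd :: "('a::topological_space \<Rightarrow> 'a) \<Rightarrow> 'a set \<Rightarrow> 'a set \<Rightarrow> bool" where
  "isolating_nbhd f \<Lambda> N \<longleftrightarrow> compact N \<and> \<Lambda> \<subseteq> interior N \<and>
     (\<forall>x. (\<forall>n::int. zpow f n x \<in> N) \<longrightarrow> x \<in> \<Lambda>)"

definition isolated_set :: "('a::topological_space \<Rightarrow> 'a) \<Rightarrow> 'a set \<Rightarrow> bool" where
  "isolated_set f \<Lambda> \<longleftrightarrow> f ` \<Lambda> = \<Lambda> \<and> (\<exists>N. isolating_nbhd f \<Lambda> N)"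

definition ddot :: "('a \<Rightarrow> 'a) \<Rightarrow> ('a \<Rightarrow> real) \<Rightarrow> 'a \<Rightarrow> real" where
  "ddot f L x = L (f x) - 2 * L x + L (inv f x)"

definition catenary_function ::
  "('a::topological_space \<Rightarrow> 'a) \<Rightarrow> 'a set \<Rightarrow> 'a set \<Rightarrow> ('a \<Rightarrow> real) \<Rightarrow> bool" where
  "catenary_function f \<Lambda> N L \<longleftrightarrow> isolating_nbhd f \<Lambda> N \<and> continuous_on N L \<and>
     (\<forall>x\<in>\<Lambda>. L x = 0) \<and> (\<forall>x\<in>N - \<Lambda>. L x > 0) \<and>
     (\<forall>x. f x \<in> N \<and> x \<in> N \<and> inv f x \<in> N \<longrightarrow> ddot f L x = L x)"

end

theory Submission
  imports Defs
begin

lemma geo_sum_cont: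
  fixes c :: real and \<phi> :: "nat \<Rightarrow> 'a::metric_space \<Rightarrow> real"
  assumes c: "0 \<le> c" "c < 1"
    and cont: "\<And>n. continuous_on UNIV (\<phi> n)"
    and bd: "\<And>n x. 0 \<le> \<phi> n x \<and> \<phi> n x \<le> 1"
  shows "continuous_on UNIV (\<lambda>x. \<Sum>n. c^n * \<phi> n x)"
proof (rule uniform_limit_theorem[where F=sequentially])
  show "\<forall>\<^sub>F n in sequentially. continuous_on UNIV (\<lambda>x. \<Sum>i<n. c^i * \<phi> i x)"
    by (intro always_eventually allI continuous_intros cont)
  show "uniform_limit UNIV (\<lambda>n x. \<Sum>i<n. c^i * \<phi> i x) (\<lambda>x. \<Sum>n. c^n * \<phi> n x) sequentially"
  proof (rule Weierstrass_m_test)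
    fix n x
    show "norm (c^n * \<phi> n x) \<le> c^n"
      using bd[of n x] c by (simp add: abs_mult mult_left_le)
  next
    show "summable (\<lambda>n. c^n)" using c by (simp add: summable_geometric)
  qed
qed simp

lemma cont_funpow:
  assumes "continuous_on UNIV (f::'a::topological_space \<Rightarrow> 'a)"
  shows "continuous_on UNIV (f^^n)"
proof (induction n)
  case 0 then show ?case by (simp add: id_def)
next
  case (Suc n)
  have "continuous_on UNIV (f \<circ> (f^^n))"
    by (rule continuous_on_compose[OF Suc]) (rule continuous_on_subset[OF assms], simp)
  then show ?case by simp
qed

lemma geo_summable:
  fixes c :: real
  assumes c: "0 \<le> c" "c < 1" and bd: "\<And>n. 0 \<le> a n \<and> a n \<le> 1"
  shows "summable (\<lambda>n. c^n * a n)"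
proof (rule summable_comparison_test[where g="\<lambda>n. c^n"])
  show "\<exists>N. \<forall>n\<ge>N. norm (c ^ n * a n) \<le> c ^ n"
    using bd c by (auto simp: abs_mult mult_left_le)
  show "summable (\<lambda>n. c^n)" using c by (simp add: summable_geometric)
qed

theorem mainTheorem15:
  fixes f :: "'a::metric_space \<Rightarrow> 'a" and \<Lambda> :: "'a set"
  assumes "homeomorphism UNIV UNIV f (inv f)"
    and "isolated_set f \<Lambda>"
  shows "\<exists>N L. catenary_function f \<Lambda> N L"
proof -
  define g where "g = inv f"
  have fg: "\<And>y. f (g y) = y" and gf: "\<And>y. g (f y) = y"
    and fc: "continuous_on UNIV f" and gc: "continuous_on UNIV g"
    using assms(1) unfolding homeomorphism_def g_def by auto
  obtain N where N: "isolating_nbhd f \<Lambda> N" and fL: "f ` \<Lambda> = \<Lambda>"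
    using assms(2) unfolding isolated_set_def by auto
  have Ncomp: "compact N" and LN: "\<Lambda> \<subseteq> N"
    and iso: "\<And>x. (\<forall>n::int. zpow f n x \<in> N) \<Longrightarrow> x \<in> \<Lambda>"
    using N interior_subset unfolding isolating_nbhd_def by blast+
  have gL: "g ` \<Lambda> \<subseteq> \<Lambda>"
  proof
    fix y assume "y \<in> g ` \<Lambda>"
    then obtain x where x: "x \<in> \<Lambda>" "y = g x" by auto
    then obtain z where "z \<in> \<Lambda>" "x = f z" using fL by auto
    thus "y \<in> \<Lambda>" using x gf by simp
  qed
  define c :: real where "c = (3 - sqrt 5) / 2"
  have s5a: "2 < sqrt 5" by (simp add: real_less_rsqrt)
  have "sqrt 5 < sqrt (3^2)" by (subst real_sqrt_less_iff) simp
  hence s5: "2 < sqrt 5" "sqrt 5 < 3" using s5a by auto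
  have c01: "0 \<le> c" "c < 1" using s5 unfolding c_def by auto
  have cq: "c * (3 - c) = 1"
  proof -
    have "sqrt 5 * sqrt 5 = 5" by simp
    thus ?thesis unfolding c_def by (simp add: field_simps power2_eq_square)
  qed
  define h where "h y = min 1 (infdist y N)" for y
  have hb: "\<And>y. 0 \<le> h y \<and> h y \<le> 1" unfolding h_def by (simp add: infdist_nonneg)
  have hc: "continuous_on UNIV h" unfolding h_def by (intro continuous_intros)
  have h0: "\<And>y. y \<in> N \<Longrightarrow> h y = 0" unfolding h_def by (simp add: infdist_zero)
  have hpos: "\<And>y. y \<notin> N \<Longrightarrow> N \<noteq> {} \<Longrightarrow> h y > 0"
  proof -
    fix y assume "y \<notin> N" "N \<noteq> {}"
    then have "infdist y N \<noteq> 0"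
      using in_closed_iff_infdist_zero[of N y] compact_imp_closed[OF Ncomp] by auto
    thus "h y > 0" unfolding h_def using infdist_nonneg[of y N] by auto
  qed
  define A where "A x = (\<Sum>n. c^n * h ((f^^n) x))" for x
  define B where "B x = (\<Sum>n. c^n * h ((g^^n) x))" for x
  define L where "L x = A x + B x - h x" for x
  have sA: "\<And>x. summable (\<lambda>n. c^n * h ((f^^n) x))"
    by (rule geo_summable[OF c01]) (use hb in auto)
  have sB: "\<And>x. summable (\<lambda>n. c^n * h ((g^^n) x))"
    by (rule geo_summable[OF c01]) (use hb in auto)
  have contA: "continuous_on UNIV A" unfolding A_def
    by (rule geo_sum_cont[OF c01])
       (auto intro!: continuous_on_compose2[OF hc] cont_funpow fc simp: hb)
  have contB: "continuous_on UNIV B" unfolding B_def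
    by (rule geo_sum_cont[OF c01])
       (auto intro!: continuous_on_compose2[OF hc] cont_funpow gc simp: hb)
  have contL: "continuous_on N L" unfolding L_def
    by (rule continuous_on_subset[of UNIV]) (intro continuous_intros contA contB hc, simp)
  have Af: "c * A (f x) = A x - h x" for x
  proof -
    have "(\<Sum>n. c^Suc n * h ((f^^Suc n) x)) = A x - h x"
      unfolding A_def using suminf_split_head[OF sA[of x]] by simp
    moreover have "(\<Sum>n. c^Suc n * h ((f^^Suc n) x)) = c * A (f x)"
      unfolding A_def using suminf_mult[OF sA[of "f x"], of c]
      by (simp add: funpow_Suc_right mult.assoc del: funpow.simps)
    ultimately show ?thesis by simp
  qed
  have Bg: "c * B (g x) = B x - h x" for x
  proof -
    have "(\<Sum>n. c^Suc n * h ((g^^Suc n) x)) = B x - h x"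
      unfolding B_def using suminf_split_head[OF sB[of x]] by simp
    moreover have "(\<Sum>n. c^Suc n * h ((g^^Suc n) x)) = c * B (g x)"
      unfolding B_def using suminf_mult[OF sB[of "g x"], of c]
      by (simp add: funpow_Suc_right mult.assoc del: funpow.simps)
    ultimately show ?thesis by simp
  qed
  have Ag: "A (g x) = h (g x) + c * A x" for x
  proof -
    have "A (g x) - h (g x) = (\<Sum>n. c^Suc n * h ((f^^Suc n) (g x)))"
      unfolding A_def using suminf_split_head[OF sA[of "g x"]] by simp
    also have "\<dots> = c * A x"
      unfolding A_def using suminf_mult[OF sA[of x], of c]
      by (simp add: funpow_Suc_right mult.assoc fg del: funpow.simps)
    finally show ?thesis by simp
  qed
  have Bf: "B (f x) = h (f x) + c * B x" for x
  proof -
    have "B (f x) - h (f x) = (\<Sum>n. c^Suc n * h ((g^^Suc n) (f x)))"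
      unfolding B_def using suminf_split_head[OF sB[of "f x"]] by simp
    also have "\<dots> = c * B x"
      unfolding B_def using suminf_mult[OF sB[of x], of c]
      by (simp add: funpow_Suc_right mult.assoc gf del: funpow.simps)
    finally show ?thesis by simp
  qed
  have rec: "ddot f L x = L x" if "x \<in> N" for x
  proof -
    have hx: "h x = 0" using h0 that .
    have "A (f x) = (3 - c) * A x"
    proof -
      have "A (f x) = (c * (3 - c)) * A (f x)" using cq by simp
      also have "\<dots> = (3 - c) * (c * A (f x))" by simp
      finally show ?thesis using Af[of x] hx by simp
    qed
    moreover have "B (g x) = (3 - c) * B x"
    proof -
      have "B (g x) = (c * (3 - c)) * B (g x)" using cq by simp
      also have "\<dots> = (3 - c) * (c * B (g x))" by simp
      finally show ?thesis using Bg[of x] hx by simp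
    qed
    ultimately show ?thesis
      unfolding ddot_def L_def g_def[symmetric] using Ag[of x] Bf[of x] hx
      by (simp add: algebra_simps)
  qed
  have Anonneg: "A x \<ge> 0" for x unfolding A_def
    by (rule suminf_nonneg[OF sA]) (use hb c01 in auto)
  have Bnonneg: "B x \<ge> 0" for x unfolding B_def
    by (rule suminf_nonneg[OF sB]) (use hb c01 in auto)
  have zero: "L x = 0" if "x \<in> \<Lambda>" for x
  proof -
    have "(f^^n) x \<in> \<Lambda>" for n by (induction n) (use that fL in auto)
    hence "(\<lambda>n. c^n * h ((f^^n) x)) = (\<lambda>n. 0)" using h0 LN by (intro ext) (simp add: subset_iff)
    hence "A x = 0" unfolding A_def by simp
    moreover have "(g^^n) x \<in> \<Lambda>" for n by (induction n) (use that gL in auto)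
    hence "(\<lambda>n. c^n * h ((g^^n) x)) = (\<lambda>n. 0)" using h0 LN by (intro ext) (simp add: subset_iff)
    hence "B x = 0" unfolding B_def by simp
    ultimately show ?thesis unfolding L_def using h0 LN that by auto
  qed
  have pos: "L x > 0" if xNL: "x \<in> N - \<Lambda>" for x
  proof -
    have Nne: "N \<noteq> {}" using that by auto
    obtain k :: int where k: "zpow f k x \<notin> N" using iso xNL by blast
    have hx: "h x = 0" using h0 that by auto
    show ?thesis
    proof (cases "0 \<le> k")
      case True
      have "0 < c" using s5 unfolding c_def by simp
      hence "0 < c ^ nat k * h ((f^^nat k) x)"
        using hpos[OF _ Nne] k True unfolding zpow_def by simp
      hence "A x > 0" unfolding A_def
        by (intro suminf_pos2[OF sA]) (use hb c01 in auto)
      thus ?thesis unfolding L_def using Bnonneg[of x] hx by simp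
    next
      case False
      have "0 < c" using s5 unfolding c_def by simp
      hence "0 < c ^ nat (-k) * h ((g^^nat (-k)) x)"
        using hpos[OF _ Nne] k False unfolding zpow_def g_def by simp
      hence "B x > 0" unfolding B_def
        by (intro suminf_pos2[OF sB]) (use hb c01 in auto)
      thus ?thesis unfolding L_def using Anonneg[of x] hx by simp
    qed
  qed
  have "catenary_function f \<Lambda> N L"
    unfolding catenary_function_def using N contL zero pos rec by blast
  thus ?thesis by blast
qed

end
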